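(* Let $(X,T)$ be a dynamical system with metric $d$, $(Y,S)$ a dynamical system with metric $d'$, and $\pi:(X,T)\to(Y,S)$ an equivariant continuous map. Then $\overline{\mathrm{mdim}}_{\mathrm{M}}(\pi,T,d)=\limsup_{\varepsilon\to0}\left\{\lim_{\delta\to0}\lim_{N\to\infty}\frac{\sup_{y\in Y}\log\#\left(\pi^{-1}(B_\delta(y,d'_N)),d_N,\varepsilon\right)}{N\log(1/\varepsilon)}\right\}$ and $\underline{\mathrm{mdim}}_{\mathrm{M}}(\pi,T,d)=\liminf_{\varepsilon\to0}\left\{\lim_{\delta\to0}\lim_{N\to\infty}\frac{\sup_{y\in Y}\log\#\left(\pi^{-1}(B_\delta(y,d'_N)),d_N,\varepsilon\right)}{N\log(1/\varepsilon)}\right\}$.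
   Context: A dynamical system is a compact metrizable space with a homeomorphism; $\pi$ equivariant means $\pi\circ T=S\circ\pi$. For $N\ge1$, $d_N(x,y)=\max_{0\le n<N}d(T^nx,T^ny)$ and $d'_N$ similarly for $S$. $B_r(y,d'_N)=\{z\in Y: d'_N(z,y)\le r\}$. For $E\subset X$, $\#(E,d_N,\varepsilon)$ is the minimal number of open sets of $d_N$-diameter $<\varepsilon$ covering $E$ ($0$ if empty). The upper and lower conditional metric mean dimensions are $\overline{\mathrm{mdim}}_{\mathrm{M}}(\pi,T,d)=\limsup_{\varepsilon\to0}\lim_{N\to\infty}\frac{\sup_{y\in Y}\log\#(\pi^{-1}(y),d_N,\varepsilon)}{N\log(1/\varepsilon)}$ and $\underline{\mathrm{mdim}}_{\mathrm{M}}(\pi,T,d)$ the same with $\liminf_{\varepsilon\to0}$. *)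

theory Defs
  imports "HOL-Analysis.Analysis"
begin

definition dyn_sys :: "('a::metric_space \<Rightarrow> 'a) \<Rightarrow> bool" where
  "dyn_sys T \<longleftrightarrow> compact (UNIV :: 'a set) \<and> (\<exists>T'. homeomorphism UNIV UNIV T T')"

definition bowen_dist :: "('a::metric_space \<Rightarrow> 'a) \<Rightarrow> nat \<Rightarrow> 'a \<Rightarrow> 'a \<Rightarrow> real" where
  "bowen_dist T N x y = Max ((\<lambda>n. dist ((T ^^ n) x) ((T ^^ n) y)) ` {..<N})"

definition bowen_diam :: "('a::metric_space \<Rightarrow> 'a) \<Rightarrow> nat \<Rightarrow> 'a set \<Rightarrow> real" where
  "bowen_diam T N U = (if U = {} then 0 else SUP p\<in>U \<times> U. bowen_dist T N (fst p) (snd p))"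

text \<open>#(E, d_N, eps): minimal number of open sets of d_N-diameter < eps covering E
  (0 if E is empty).\<close>
definition cover_num :: "('a::metric_space \<Rightarrow> 'a) \<Rightarrow> nat \<Rightarrow> real \<Rightarrow> 'a set \<Rightarrow> nat" where
  "cover_num T N \<epsilon> E = (LEAST k. \<exists>F. finite F \<and> card F = k \<and>
      (\<forall>U\<in>F. open U \<and> bowen_diam T N U < \<epsilon>) \<and> E \<subseteq> \<Union>F)"

definition bowen_ball :: "('b::metric_space \<Rightarrow> 'b) \<Rightarrow> nat \<Rightarrow> 'b \<Rightarrow> real \<Rightarrow> 'b set" where
  "bowen_ball S N y r = {z. bowen_dist S N z y \<le> r}"

definition fiber_rate :: "('a::metric_space \<Rightarrow> 'a) \<Rightarrow> ('a \<Rightarrow> 'b) \<Rightarrow> real \<Rightarrow> real" where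
  "fiber_rate T \<pi> \<epsilon> = lim (\<lambda>N. (SUP y. ln (real (cover_num T N \<epsilon> (\<pi> -` {y}))))
                                  / (real N * ln (1 / \<epsilon>)))"

definition upper_cond_mdim :: "('a::metric_space \<Rightarrow> 'a) \<Rightarrow> ('a \<Rightarrow> 'b) \<Rightarrow> ereal" where
  "upper_cond_mdim T \<pi> = Limsup (at_right 0) (\<lambda>\<epsilon>. ereal (fiber_rate T \<pi> \<epsilon>))"

definition lower_cond_mdim :: "('a::metric_space \<Rightarrow> 'a) \<Rightarrow> ('a \<Rightarrow> 'b) \<Rightarrow> ereal" where
  "lower_cond_mdim T \<pi> = Liminf (at_right 0) (\<lambda>\<epsilon>. ereal (fiber_rate T \<pi> \<epsilon>))"

definition ball_rate :: "('a::metric_space \<Rightarrow> 'a) \<Rightarrow> ('b::metric_space \<Rightarrow> 'b) \<Rightarrow> ('a \<Rightarrow> 'b)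
    \<Rightarrow> real \<Rightarrow> real" where
  "ball_rate T S \<pi> \<epsilon> = Lim (at_right 0) (\<lambda>\<delta>.
      lim (\<lambda>N. (SUP y. ln (real (cover_num T N \<epsilon> (\<pi> -` bowen_ball S N y \<delta>))))
                / (real N * ln (1 / \<epsilon>))))"

end

theory Submission imports Defs begin

lemma bd_ge: "n < N \<Longrightarrow> dist ((T ^^ n) x) ((T ^^ n) y) \<le> bowen_dist T N x y"
  unfolding bowen_dist_def by (rule Max_ge) auto

lemma bd_le: "N \<ge> 1 \<Longrightarrow> (\<And>n. n < N \<Longrightarrow> dist ((T ^^ n) x) ((T ^^ n) y) \<le> r) \<Longrightarrow> bowen_dist T N x y \<le> r"
  unfolding bowen_dist_def by (subst Max_le_iff) (auto simp: lessThan_empty_iff)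

lemma bd_nonneg: "N \<ge> 1 \<Longrightarrow> 0 \<le> bowen_dist T N x y"
  using bd_ge[of 0 N T x y] by (smt (verit) zero_le_dist less_le_trans zero_less_one)

lemma bd_refl: "N \<ge> 1 \<Longrightarrow> bowen_dist T N x x = 0"
  using bd_le[of N T x x 0] bd_nonneg[of N T x x] by simp

lemma bd_dist: "N \<ge> 1 \<Longrightarrow> dist x y \<le> bowen_dist T N x y"
  using bd_ge[of 0 N T x y] by simp

lemma bd_triangle: "N \<ge> 1 \<Longrightarrow> bowen_dist T N x z \<le> bowen_dist T N x y + bowen_dist T N y z"
proof (rule bd_le)
  fix n assume "N \<ge> 1" "n < N"
  have "dist ((T ^^ n) x) ((T ^^ n) z) \<le> dist ((T ^^ n) x) ((T ^^ n) y) + dist ((T ^^ n) y) ((T ^^ n) z)"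
    by (rule dist_triangle)
  also have "\<dots> \<le> bowen_dist T N x y + bowen_dist T N y z"
    using bd_ge[OF \<open>n<N\<close>] by (intro add_mono)
  finally show "dist ((T ^^ n) x) ((T ^^ n) z) \<le> bowen_dist T N x y + bowen_dist T N y z" .
qed

lemma bd_sym: "bowen_dist T N x y = bowen_dist T N y x"
  unfolding bowen_dist_def by (simp add: dist_commute)

lemma bd_mono: "N \<ge> 1 \<Longrightarrow> N \<le> M \<Longrightarrow> bowen_dist T N x y \<le> bowen_dist T M x y"
  by (rule bd_le) (auto intro: bd_ge)

lemma bd_shift: "M \<ge> 1 \<Longrightarrow> bowen_dist T M ((T ^^ N) x) ((T ^^ N) y) \<le> bowen_dist T (N + M) x y"
proof (rule bd_le)
  fix n assume "n < M"
  have "(T ^^ n) ((T ^^ N) x) = (T ^^ (n + N)) x" "(T ^^ n) ((T ^^ N) y) = (T ^^ (n + N)) y"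
    by (simp_all add: funpow_add)
  then show "dist ((T ^^ n) ((T ^^ N) x)) ((T ^^ n) ((T ^^ N) y)) \<le> bowen_dist T (N + M) x y"
    using bd_ge[of "n+N" "N+M" T x y] \<open>n<M\<close> by simp
qed

lemma bd_split: "N \<ge> 1 \<Longrightarrow> M \<ge> 1 \<Longrightarrow>
   bowen_dist T (N + M) x y \<le> max (bowen_dist T N x y) (bowen_dist T M ((T ^^ N) x) ((T ^^ N) y))"
proof (rule bd_le)
  fix n assume "N \<ge> 1" "M \<ge> 1" "n < N + M"
  show "dist ((T ^^ n) x) ((T ^^ n) y) \<le> max (bowen_dist T N x y) (bowen_dist T M ((T ^^ N) x) ((T ^^ N) y))"
  proof (cases "n < N")
    case True then show ?thesis using bd_ge[of n N T x y] by linarith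
  next
    case False
    then obtain k where k: "n = k + N" "k < M" using \<open>n < N + M\<close>
      by (metis add.commute add_diff_inverse_nat less_diff_conv2 not_less)
    have "(T ^^ n) x = (T ^^ k) ((T ^^ N) x)" "(T ^^ n) y = (T ^^ k) ((T ^^ N) y)"
      by (simp_all add: k funpow_add)
    then show ?thesis using bd_ge[of k M T "(T ^^ N) x" "(T ^^ N) y"] k by simp
  qed
qed (simp)

lemma fekete:
  fixes a :: "nat \<Rightarrow> real"
  assumes sub: "\<And>n m. n \<ge> 1 \<Longrightarrow> m \<ge> 1 \<Longrightarrow> a (n+m) \<le> a n + a m"
    and nn: "\<And>n. n \<ge> 1 \<Longrightarrow> a n \<ge> 0"
  shows "(\<lambda>n. a n / real n) \<longlonglongrightarrow> (INF n\<in>{1..}. a n / real n)"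
proof -
  define I where "I = (INF n\<in>{1..}. a n / real n)"
  have bdd: "bdd_below ((\<lambda>n. a n / real n) ` {1..})"
    by (rule bdd_belowI[of _ 0]) (auto intro!: divide_nonneg_nonneg nn)
  have low: "I \<le> a n / real n" if "n \<ge> 1" for n
    unfolding I_def by (rule cINF_lower[OF bdd]) (use that in auto)
  have key: "a n / real n \<le> a L / real L + Max (a ` {1..L}) / real n" if L: "L \<ge> 1" and n: "n \<ge> 1" for L n
  proof -
    define C where "C = Max (a ` {1..L})"
    have ind: "\<forall>r\<in>{1..L}. a (q*L + r) \<le> real q * a L + C" for q
    proof (induction q)
      case 0 then show ?case unfolding C_def by (auto intro: Max_ge)
    next
      case (Suc q)
      show ?case
      proof
        fix r assume r: "r \<in> {1..L}"
        have "a (Suc q * L + r) = a (L + (q * L + r))" by (simp add: algebra_simps)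
        also have "\<dots> \<le> a L + a (q*L + r)" using sub L r by auto
        also have "\<dots> \<le> a L + (real q * a L + C)" using Suc r by auto
        finally show "a (Suc q * L + r) \<le> real (Suc q) * a L + C" by (simp add: algebra_simps)
      qed
    qed
    define q where "q = (n - 1) div L"
    define r where "r = (n - 1) mod L + 1"
    have nq: "n = q * L + r" unfolding q_def r_def using n
      by (metis add.commute add_diff_inverse_nat div_mult_mod_eq less_one not_less add.assoc)
    have r: "r \<in> {1..L}" unfolding r_def using L
      by (auto simp: Suc_le_eq)
    have an: "a n \<le> real q * a L + C" using ind[of q] r nq by auto
    have "real q * real L \<le> real n" using nq by (metis le_add1 of_nat_le_iff of_nat_mult)
    then have "real q \<le> real n / real L" using L by (simp add: field_simps)
    then have "real q * a L \<le> real n / real L * a L" using nn[OF L] by (rule mult_right_mono)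
    then have "a n \<le> real n * (a L / real L) + C" using an by simp
    then have "a n / real n \<le> (real n * (a L / real L) + C) / real n"
      using n by (simp add: divide_right_mono)
    also have "\<dots> = a L / real L + C / real n" using n by (simp add: field_simps)
    finally show ?thesis unfolding C_def .
  qed
  show ?thesis unfolding I_def[symmetric]
  proof (rule order_tendstoI)
    fix y assume "y < I"
    show "\<forall>\<^sub>F n in sequentially. y < a n / real n"
      using eventually_ge_at_top[of 1] by eventually_elim (use low \<open>y < I\<close> in fastforce)
  next
    fix y assume "I < y"
    then obtain L where L: "L \<ge> 1" "a L / real L < y"
      unfolding I_def by (subst (asm) cINF_less_iff[OF _ bdd]) auto
    have "(\<lambda>n. a L / real L + Max (a ` {1..L}) / real n) \<longlonglongrightarrow> a L / real L + 0"
      by (intro tendsto_add tendsto_const tendsto_divide_0[OF tendsto_const] filterlim_at_top_imp_at_infinity filterlim_real_sequentially)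
    then have "\<forall>\<^sub>F n in sequentially. a L / real L + Max (a ` {1..L}) / real n < y"
      using L(2) by (intro order_tendstoD(2)) auto
    then show "\<forall>\<^sub>F n in sequentially. a n / real n < y"
      using eventually_ge_at_top[of 1] by eventually_elim (use key[OF L(1)] in fastforce)
  qed
qed


lemma funpow_cont: "continuous_on UNIV (T::'a::topological_space\<Rightarrow>'a) \<Longrightarrow> continuous_on UNIV (T ^^ n)"
proof (induction n)
  case 0 have "T ^^ 0 = id" by simp then show ?case by (simp add: continuous_on_id')
next
  case (Suc n)
  have "T ^^ Suc n = T \<circ> T ^^ n" by simp
  then show ?case using Suc continuous_on_compose[of UNIV "T ^^ n" T]
    by (metis continuous_on_subset subset_UNIV)
qed

lemma bd_bounded:
  assumes "compact (UNIV :: 'a::metric_space set)"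
  obtains B where "\<And>N x y. N \<ge> 1 \<Longrightarrow> bowen_dist (T::'a\<Rightarrow>'a) N x y \<le> B"
proof -
  have "bounded (UNIV :: 'a set)" using assms by (rule compact_imp_bounded)
  then obtain z e where ze: "\<And>x::'a. dist z x \<le> e" unfolding bounded_def by auto
  have "dist a b \<le> 2 * e" for a b :: 'a
    using dist_triangle[of a b z] ze[of a] ze[of b] by (simp add: dist_commute)
  then show ?thesis by (intro that[of "2*e"] bd_le) auto
qed

lemma diam_le: "0 \<le> r \<Longrightarrow> (\<And>x y. x \<in> U \<Longrightarrow> y \<in> U \<Longrightarrow> bowen_dist T N x y \<le> r) \<Longrightarrow> bowen_diam T N U \<le> r"
  unfolding bowen_diam_def by (auto intro!: cSUP_least)

lemma diam_ge:
  assumes "compact (UNIV :: 'a::metric_space set)" "N \<ge> 1" "x \<in> U" "y \<in> U"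
  shows "bowen_dist (T::'a\<Rightarrow>'a) N x y \<le> bowen_diam T N U"
proof -
  obtain B where B: "\<And>N x y. N \<ge> 1 \<Longrightarrow> bowen_dist T N x y \<le> B" using bd_bounded[OF assms(1)] by blast
  have bdd: "bdd_above ((\<lambda>p. bowen_dist T N (fst p) (snd p)) ` (U \<times> U))"
    by (rule bdd_aboveI[of _ B]) (use B assms(2) in auto)
  show ?thesis unfolding bowen_diam_def using assms(3,4)
    by (auto intro!: cSUP_upper2[OF bdd, of "(x,y)"])
qed

lemma diam_nonneg:
  assumes "compact (UNIV :: 'a::metric_space set)" "N \<ge> 1"
  shows "0 \<le> bowen_diam (T::'a\<Rightarrow>'a) N U"
proof (cases "U = {}")
  case True then show ?thesis by (simp add: bowen_diam_def)
next
  case False then obtain x where "x \<in> U" by auto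
  then show ?thesis using diam_ge[OF assms, of x U x T] bd_refl[OF assms(2), of T x] by simp
qed

lemma open_bball:
  assumes "continuous_on UNIV T" "N \<ge> 1"
  shows "open {z. bowen_dist T N x z < r}"
proof -
  have "{z. bowen_dist T N x z < r} = (\<Inter>n\<in>{..<N}. (T ^^ n) -` ball ((T ^^ n) x) r)"
    unfolding bowen_dist_def using assms(2)
    by (subst Max_less_iff) (auto simp: lessThan_empty_iff)
  also have "open \<dots>"
    by (intro open_INT finite_lessThan ballI open_vimage open_ball funpow_cont assms(1))
  finally show ?thesis .
qed

definition goodcov :: "('a::metric_space \<Rightarrow> 'a) \<Rightarrow> nat \<Rightarrow> real \<Rightarrow> 'a set set \<Rightarrow> bool" where
  "goodcov T N e F \<longleftrightarrow> finite F \<and> (\<forall>U\<in>F. open U \<and> bowen_diam T N U < e)"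

lemma cover_exists:
  assumes "compact (UNIV :: 'a::metric_space set)" "continuous_on UNIV (T::'a\<Rightarrow>'a)" "N \<ge> 1" "e > 0"
  shows "\<exists>F. goodcov T N e F \<and> UNIV \<subseteq> \<Union>F"
proof -
  define C where "C = (\<lambda>x. {z. bowen_dist T N x z < e/3}) ` UNIV"
  have "x \<in> {z. bowen_dist T N x z < e/3}" for x using bd_refl[OF assms(3), of T x] assms(4) by auto
  then have "UNIV \<subseteq> \<Union>C" unfolding C_def by blast
  moreover have opC: "\<And>B. B \<in> C \<Longrightarrow> open B" unfolding C_def using open_bball[OF assms(2,3)] by blast
  ultimately obtain F where F: "F \<subseteq> C" "finite F" "UNIV \<subseteq> \<Union>F" using compactE[OF assms(1)] by metis
  have "bowen_diam T N U < e" if "U \<in> C" for U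
  proof -
    obtain x where U: "U = {z. bowen_dist T N x z < e/3}" using \<open>U \<in> C\<close> unfolding C_def by auto
    have "bowen_diam T N U \<le> 2*e/3"
    proof (rule diam_le)
      fix y z assume "y \<in> U" "z \<in> U"
      then have "bowen_dist T N y x < e/3" "bowen_dist T N x z < e/3" using U bd_sym[of T N x y] by auto
      then show "bowen_dist T N y z \<le> 2*e/3" using bd_triangle[OF assms(3), of T y z x] by linarith
    qed (use assms(4) in auto)
    then show ?thesis using assms(4) by linarith
  qed
  then show ?thesis using F unfolding goodcov_def by (intro exI[of _ F]) (use opC in auto)
qed

lemma cover_le: "goodcov T N e F \<Longrightarrow> E \<subseteq> \<Union>F \<Longrightarrow> cover_num T N e E \<le> card F"
  unfolding cover_num_def goodcov_def by (rule Least_le) blast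

lemma cover_wit:
  assumes "compact (UNIV :: 'a::metric_space set)" "continuous_on UNIV (T::'a\<Rightarrow>'a)" "N \<ge> 1" "e > 0"
  shows "\<exists>F. goodcov T N e F \<and> card F = cover_num T N e E \<and> E \<subseteq> \<Union>F"
proof -
  obtain F where "goodcov T N e F" "UNIV \<subseteq> \<Union>F" using cover_exists[OF assms] by blast
  then have "\<exists>k F. finite F \<and> card F = k \<and> (\<forall>U\<in>F. open U \<and> bowen_diam T N U < e) \<and> E \<subseteq> \<Union>F"
    unfolding goodcov_def by blast
  then have "\<exists>F. finite F \<and> card F = cover_num T N e E \<and> (\<forall>U\<in>F. open U \<and> bowen_diam T N U < e) \<and> E \<subseteq> \<Union>F"
    unfolding cover_num_def by (rule LeastI_ex)
  then show ?thesis unfolding goodcov_def by blast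
qed

lemma cover_mono:
  assumes "compact (UNIV :: 'a::metric_space set)" "continuous_on UNIV (T::'a\<Rightarrow>'a)" "N \<ge> 1" "e > 0"
    and "E \<subseteq> E'"
  shows "cover_num T N e E \<le> cover_num T N e E'"
proof -
  obtain F where "goodcov T N e F" "card F = cover_num T N e E'" "E' \<subseteq> \<Union>F" using cover_wit[OF assms(1-4)] by blast
  then show ?thesis using cover_le[of T N e F E] assms(5) by auto
qed

lemma cover_zero:
  assumes "compact (UNIV :: 'a::metric_space set)" "continuous_on UNIV (T::'a\<Rightarrow>'a)" "N \<ge> 1" "e > 0"
    and "cover_num T N e E = 0"
  shows "E = {}"
proof -
  obtain F where "goodcov T N e F" "card F = cover_num T N e E" "E \<subseteq> \<Union>F" using cover_wit[OF assms(1-4)] by blast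
  then show ?thesis using assms(5) unfolding goodcov_def by auto
qed

lemma cover_prod:
  assumes X: "compact (UNIV :: 'a::metric_space set)" "continuous_on UNIV (T::'a\<Rightarrow>'a)" and NM: "N \<ge> 1" "M \<ge> 1" and "e > 0"
    and E: "E \<subseteq> E1 \<inter> (T ^^ N) -` E2"
  shows "cover_num T (N + M) e E \<le> cover_num T N e E1 * cover_num T M e E2"
proof -
  obtain F1 where F1: "goodcov T N e F1" "card F1 = cover_num T N e E1" "E1 \<subseteq> \<Union>F1"
    using cover_wit[OF X NM(1) \<open>e>0\<close>] by blast
  obtain F2 where F2: "goodcov T M e F2" "card F2 = cover_num T M e E2" "E2 \<subseteq> \<Union>F2"
    using cover_wit[OF X NM(2) \<open>e>0\<close>] by blast
  define F where "F = (\<lambda>(U,V). U \<inter> (T ^^ N) -` V) ` (F1 \<times> F2)"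
  have fin: "finite (F1 \<times> F2)" using F1 F2 unfolding goodcov_def by auto
  have "goodcov T (N+M) e F"
    unfolding goodcov_def
  proof (intro conjI ballI)
    show "finite F" unfolding F_def using fin by auto
  next
    fix W assume "W \<in> F"
    then obtain U V where UV: "U \<in> F1" "V \<in> F2" "W = U \<inter> (T ^^ N) -` V" unfolding F_def by auto
    show "open W" using UV F1(1) F2(1) unfolding goodcov_def
      by (auto intro!: open_Int open_vimage funpow_cont X(2))
    have "bowen_diam T (N+M) W \<le> max (bowen_diam T N U) (bowen_diam T M V)"
    proof (rule diam_le)
      show "0 \<le> max (bowen_diam T N U) (bowen_diam T M V)" using diam_nonneg[OF X(1) NM(1)] by (simp add: le_max_iff_disj)
    next
      fix x y assume "x \<in> W" "y \<in> W"
      then have "bowen_dist T N x y \<le> bowen_diam T N U"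
          "bowen_dist T M ((T ^^ N) x) ((T ^^ N) y) \<le> bowen_diam T M V"
        using UV diam_ge[OF X(1) NM(1), of x U y T] diam_ge[OF X(1) NM(2), of "(T^^N) x" V "(T^^N) y" T] by auto
      then show "bowen_dist T (N + M) x y \<le> max (bowen_diam T N U) (bowen_diam T M V)"
        using bd_split[OF NM, of T x y] by linarith
    qed
    moreover have "bowen_diam T N U < e" "bowen_diam T M V < e" using UV F1(1) F2(1) unfolding goodcov_def by auto
    ultimately show "bowen_diam T (N+M) W < e" by (simp add: UV(3))
  qed
  moreover have "E \<subseteq> \<Union>F"
  proof
    fix x assume "x \<in> E"
    then obtain U V where "U \<in> F1" "V \<in> F2" "x \<in> U" "(T^^N) x \<in> V" using E F1(3) F2(3) by blast
    then show "x \<in> \<Union>F" unfolding F_def by blast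
  qed
  ultimately have "cover_num T (N + M) e E \<le> card F" by (rule cover_le)
  also have "\<dots> \<le> card (F1 \<times> F2)" unfolding F_def using fin by (rule card_image_le)
  also have "\<dots> = cover_num T N e E1 * cover_num T M e E2" using F1(2) F2(2) by (simp add: card_cartesian_product)
  finally show ?thesis .
qed


lemma ln_nat_nonneg: "0 \<le> ln (real a)"
  by (cases "a = 0") auto

lemma ln_nat_mono: "a \<le> b \<Longrightarrow> ln (real a) \<le> ln (real b)"
  by (cases "a = 0") (auto simp: ln_nat_nonneg)

lemma sup_bdd:
  assumes "compact (UNIV :: 'a::metric_space set)" "continuous_on UNIV (T::'a\<Rightarrow>'a)" "N \<ge> 1" "e > 0"
  shows "bdd_above (range (\<lambda>y. ln (real (cover_num T N e (P y)))))"
  by (rule bdd_aboveI[of _ "ln (real (cover_num T N e UNIV))"])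
     (auto intro!: ln_nat_mono cover_mono[OF assms])

lemma sup_nonneg:
  assumes "compact (UNIV :: 'a::metric_space set)" "continuous_on UNIV (T::'a\<Rightarrow>'a)" "N \<ge> 1" "e > 0"
  shows "0 \<le> (SUP y. ln (real (cover_num T N e (P y))))"
  by (rule cSUP_upper2[OF sup_bdd[OF assms], of undefined]) (auto simp: ln_nat_nonneg)

lemma sup_subadd:
  assumes X: "compact (UNIV :: 'a::metric_space set)" "continuous_on UNIV (T::'a\<Rightarrow>'a)" and NM: "N \<ge> 1" "M \<ge> 1" and e: "e > 0"
    and incl: "\<And>y. P (N+M) y \<subseteq> P N y \<inter> (T ^^ N) -` P M (g y)"
  shows "(SUP y. ln (real (cover_num T (N+M) e (P (N+M) y))))
      \<le> (SUP y. ln (real (cover_num T N e (P N y)))) + (SUP y. ln (real (cover_num T M e (P M y))))"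
proof (rule cSUP_least)
  fix y
  define c where "c = cover_num T (N+M) e (P (N+M) y)"
  define c1 where "c1 = cover_num T N e (P N y)"
  define c2 where "c2 = cover_num T M e (P M (g y))"
  have c: "c \<le> c1 * c2" unfolding c_def c1_def c2_def by (rule cover_prod[OF X NM e incl])
  have "ln (real c) \<le> ln (real c1) + ln (real c2)"
  proof (cases "c = 0")
    case True then show ?thesis by (simp add: ln_nat_nonneg add_nonneg_nonneg)
  next
    case False
    then have "c1 > 0" "c2 > 0" using c by (metis le_0_eq mult_0 mult_0_right neq0_conv)+
    then have "ln (real c) \<le> ln (real (c1 * c2))" using c by (intro ln_nat_mono)
    also have "\<dots> = ln (real c1) + ln (real c2)" using \<open>c1>0\<close> \<open>c2>0\<close> by (simp add: ln_mult)
    finally show ?thesis .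
  qed
  also have "\<dots> \<le> (SUP y. ln (real (cover_num T N e (P N y)))) + (SUP y. ln (real (cover_num T M e (P M y))))"
    unfolding c1_def c2_def
    by (intro add_mono cSUP_upper sup_bdd[OF X] NM e) auto
  finally show "ln (real (cover_num T (N+M) e (P (N+M) y)))
      \<le> (SUP y. ln (real (cover_num T N e (P N y)))) + (SUP y. ln (real (cover_num T M e (P M y))))"
    unfolding c_def .
qed auto

lemma rate_lim:
  fixes a :: "nat \<Rightarrow> real"
  assumes sub: "\<And>n m. n \<ge> 1 \<Longrightarrow> m \<ge> 1 \<Longrightarrow> a (n+m) \<le> a n + a m"
    and nn: "\<And>n. n \<ge> 1 \<Longrightarrow> a n \<ge> 0" and c: "c \<noteq> 0"
  shows "lim (\<lambda>N. a N / (real N * c)) = (INF n\<in>{1..}. a n / real n) / c"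
proof -
  have "(\<lambda>N. a N / real N / c) \<longlonglongrightarrow> (INF n\<in>{1..}. a n / real n) / c"
    by (intro tendsto_divide tendsto_const fekete[OF sub nn] c) auto
  then show ?thesis by (simp add: divide_divide_eq_left limI)
qed


lemma comm_pow:
  assumes "\<pi> \<circ> T = S \<circ> \<pi>"
  shows "\<pi> ((T ^^ n) x) = (S ^^ n) (\<pi> x)"
proof (induction n)
  case (Suc n)
  have "\<pi> (T ((T ^^ n) x)) = S (\<pi> ((T ^^ n) x))" using assms by (metis comp_apply)
  then show ?case using Suc by simp
qed simp

lemma leb:
  assumes X: "compact (UNIV :: 'a::metric_space set)" "continuous_on UNIV (T::'a\<Rightarrow>'a)"
    and Y: "compact (UNIV :: 'b::metric_space set)" and pc: "continuous_on UNIV (\<pi>::'a\<Rightarrow>'b)"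
    and L: "L \<ge> 1" and e: "e > 0"
  shows "\<exists>d>0. \<forall>\<delta>. 0 < \<delta> \<longrightarrow> \<delta> \<le> d \<longrightarrow> (\<forall>y'. \<exists>y.
      cover_num T L e (\<pi> -` bowen_ball (S::'b\<Rightarrow>'b) L y' \<delta>) \<le> cover_num T L e (\<pi> -` {y}))"
proof -
  have "\<forall>y. \<exists>F. goodcov T L e F \<and> card F = cover_num T L e (\<pi> -` {y}) \<and> \<pi> -` {y} \<subseteq> \<Union>F"
    using cover_wit[OF X L e] by blast
  then obtain F where F: "\<And>y. goodcov T L e (F y)" "\<And>y. card (F y) = cover_num T L e (\<pi> -` {y})"
      "\<And>y. \<pi> -` {y} \<subseteq> \<Union>(F y)" by metis
  define W where "W y = \<Union>(F y)" for y
  define V where "V y = - (\<pi> ` (- W y))" for y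
  have oW: "open (W y)" for y using F(1)[of y] unfolding W_def goodcov_def by auto
  have oV: "open (V y)" for y
  proof -
    have "compact (UNIV \<inter> - W y)" using X(1) oW[of y] by (intro compact_Int_closed) (auto simp: closed_Compl)
    then have "compact (\<pi> ` (- W y))" using pc by (intro compact_continuous_image) (auto intro: continuous_on_subset)
    then show ?thesis unfolding V_def by (simp add: compact_imp_closed open_Compl)
  qed
  have yV: "y \<in> V y" for y using F(3)[of y] unfolding V_def W_def by auto
  have VW: "\<pi> -` V y \<subseteq> W y" for y unfolding V_def by auto
  obtain d0 where d0: "0 < d0" "\<And>B. B \<subseteq> UNIV \<Longrightarrow> diameter B < d0 \<Longrightarrow> \<exists>C \<in> range V. B \<subseteq> C"
    using Lebesgue_number_lemma[OF Y, of "range V"] yV oV by blast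
  show ?thesis
  proof (intro exI[of _ "d0/3"] conjI allI impI)
    show "0 < d0/3" using d0 by simp
  next
    fix \<delta> y' assume \<delta>: "0 < \<delta>" "\<delta> \<le> d0/3"
    define B where "B = bowen_ball S L y' \<delta>"
    have Bd: "dist z y' \<le> \<delta>" if "z \<in> B" for z
      using that bd_dist[OF L, of z y' S] unfolding B_def bowen_ball_def by auto
    have "y' \<in> B" unfolding B_def bowen_ball_def using bd_refl[OF L, of S y'] \<delta> by auto
    have pd: "dist a b \<le> 2 * \<delta>" if "a \<in> B" "b \<in> B" for a b
      using that Bd[of a] Bd[of b] dist_triangle[of a b y'] by (simp add: dist_commute)
    have "diameter B \<le> 2 * \<delta>" unfolding diameter_def using \<open>y' \<in> B\<close> pd
      by (auto intro!: cSUP_least)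
    then have "diameter B < d0" using \<delta> d0 by linarith
    then obtain y where "B \<subseteq> V y" using d0(2)[of B] by auto
    then have "\<pi> -` B \<subseteq> \<Union>(F y)" using VW[of y] unfolding W_def by blast
    then have "cover_num T L e (\<pi> -` B) \<le> cover_num T L e (\<pi> -` {y})"
      using cover_le[OF F(1)[of y]] F(2)[of y] by metis
    then show "\<exists>y. cover_num T L e (\<pi> -` bowen_ball S L y' \<delta>) \<le> cover_num T L e (\<pi> -` {y})"
      unfolding B_def by blast
  qed
qed


lemma rate_eq:
  assumes X: "compact (UNIV :: 'a::metric_space set)" "continuous_on UNIV (T::'a\<Rightarrow>'a)"
    and Y: "compact (UNIV :: 'b::metric_space set)" and pc: "continuous_on UNIV (\<pi>::'a\<Rightarrow>'b)"
    and comm: "\<pi> \<circ> T = S \<circ> \<pi>" and e: "0 < e" "e < 1"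
  shows "fiber_rate T \<pi> e = ball_rate T S \<pi> e"
proof -
  define c where "c = ln (1 / e)"
  have c: "c > 0" unfolding c_def using e by simp
  define f where "f N = (SUP y. ln (real (cover_num T N e (\<pi> -` {y}))))" for N
  define b where "b \<delta> N = (SUP y. ln (real (cover_num T N e (\<pi> -` bowen_ball S N y \<delta>))))" for \<delta> N
  define If where "If = (INF n\<in>{1..}. f n / real n)"
  define Ib where "Ib \<delta> = (INF n\<in>{1..}. b \<delta> n / real n)" for \<delta>
  have fsub: "f (n+m) \<le> f n + f m" if "n \<ge> 1" "m \<ge> 1" for n m
    unfolding f_def
    by (rule sup_subadd[OF X that e(1), where P="\<lambda>N y. \<pi> -` {y}" and g="S ^^ n"])
       (auto simp: comm_pow[OF comm])
  have fnn: "f n \<ge> 0" if "n \<ge> 1" for n unfolding f_def by (rule sup_nonneg[OF X that e(1)])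
  have bsub: "b \<delta> (n+m) \<le> b \<delta> n + b \<delta> m" if "n \<ge> 1" "m \<ge> 1" for n m \<delta>
    unfolding b_def
  proof (rule sup_subadd[OF X that e(1), where P="\<lambda>N y. \<pi> -` bowen_ball S N y \<delta>" and g="S ^^ n"])
    fix y show "\<pi> -` bowen_ball S (n + m) y \<delta> \<subseteq> \<pi> -` bowen_ball S n y \<delta> \<inter> (T ^^ n) -` \<pi> -` bowen_ball S m ((S ^^ n) y) \<delta>"
    proof
      fix x assume "x \<in> \<pi> -` bowen_ball S (n + m) y \<delta>"
      then have x: "bowen_dist S (n+m) (\<pi> x) y \<le> \<delta>" unfolding bowen_ball_def by auto
      have "x \<in> \<pi> -` bowen_ball S n y \<delta>" using x bd_mono[OF that(1), of "n+m" S "\<pi> x" y]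
        unfolding bowen_ball_def by auto
      moreover have "x \<in> (T ^^ n) -` \<pi> -` bowen_ball S m ((S ^^ n) y) \<delta>"
        using x bd_shift[OF that(2), of S n "\<pi> x" y] unfolding bowen_ball_def
        by (auto simp: comm_pow[OF comm])
      ultimately show "x \<in> \<pi> -` bowen_ball S n y \<delta> \<inter> (T ^^ n) -` \<pi> -` bowen_ball S m ((S ^^ n) y) \<delta>" by blast
    qed
  qed
  have bnn: "b \<delta> n \<ge> 0" if "n \<ge> 1" for n \<delta> unfolding b_def by (rule sup_nonneg[OF X that e(1)])
  have fr: "fiber_rate T \<pi> e = If / c"
    unfolding fiber_rate_def c_def[symmetric] f_def[symmetric] If_def
    by (rule rate_lim[OF fsub fnn]) (use c in auto)
  have br: "lim (\<lambda>N. b \<delta> N / (real N * c)) = Ib \<delta> / c" for \<delta>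
    unfolding Ib_def by (rule rate_lim[OF bsub bnn]) (use c in auto)
  have bddf: "bdd_below ((\<lambda>n. f n / real n) ` {1..})"
    by (rule bdd_belowI[of _ 0]) (auto intro!: divide_nonneg_nonneg fnn)
  have bddb: "bdd_below ((\<lambda>n. b \<delta> n / real n) ` {1..})" for \<delta>
    by (rule bdd_belowI[of _ 0]) (auto intro!: divide_nonneg_nonneg bnn)
  have fb: "f n \<le> b \<delta> n" if "n \<ge> 1" "\<delta> \<ge> 0" for n \<delta>
    unfolding f_def b_def
  proof (rule cSUP_mono)
    show "bdd_above (range (\<lambda>y. ln (real (cover_num T n e (\<pi> -` bowen_ball S n y \<delta>)))))"
      by (rule sup_bdd[OF X that(1) e(1)])
    fix y
    have "\<pi> -` {y} \<subseteq> \<pi> -` bowen_ball S n y \<delta>"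
      unfolding bowen_ball_def using bd_refl[OF that(1), of S y] that(2) by auto
    then show "\<exists>m\<in>UNIV. ln (real (cover_num T n e (\<pi> -` {y}))) \<le> ln (real (cover_num T n e (\<pi> -` bowen_ball S n m \<delta>)))"
      by (intro bexI[of _ y] ln_nat_mono cover_mono[OF X that(1) e(1)]) auto
  qed auto
  have low: "If \<le> Ib \<delta>" if "\<delta> \<ge> 0" for \<delta>
    unfolding If_def Ib_def
  proof (rule cINF_mono[OF _ bddf])
    fix m :: nat assume "m \<in> {1..}"
    then show "\<exists>n\<in>{1..}. f n / real n \<le> b \<delta> m / real m"
      using fb[of m \<delta>] that by (intro bexI[of _ m] divide_right_mono) auto
  qed auto
  have up: "\<exists>d>0. \<forall>\<delta>. 0 < \<delta> \<longrightarrow> \<delta> \<le> d \<longrightarrow> Ib \<delta> \<le> f L / real L" if L: "L \<ge> 1" for L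
  proof -
    obtain d where d: "d > 0" "\<And>\<delta> y'. 0 < \<delta> \<Longrightarrow> \<delta> \<le> d \<Longrightarrow> \<exists>y.
      cover_num T L e (\<pi> -` bowen_ball S L y' \<delta>) \<le> cover_num T L e (\<pi> -` {y})"
      using leb[OF X Y pc L e(1), of S] by blast
    have "Ib \<delta> \<le> f L / real L" if \<delta>: "0 < \<delta>" "\<delta> \<le> d" for \<delta>
    proof -
      have "b \<delta> L \<le> f L" unfolding b_def f_def
      proof (rule cSUP_least)
        fix y'
        obtain y where "cover_num T L e (\<pi> -` bowen_ball S L y' \<delta>) \<le> cover_num T L e (\<pi> -` {y})"
          using d(2)[OF \<delta>] by blast
        then have "ln (real (cover_num T L e (\<pi> -` bowen_ball S L y' \<delta>))) \<le> ln (real (cover_num T L e (\<pi> -` {y})))"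
          by (rule ln_nat_mono)
        also have "\<dots> \<le> (SUP y. ln (real (cover_num T L e (\<pi> -` {y}))))"
          by (rule cSUP_upper[OF _ sup_bdd[OF X L e(1)]]) auto
        finally show "ln (real (cover_num T L e (\<pi> -` bowen_ball S L y' \<delta>))) \<le> (SUP y. ln (real (cover_num T L e (\<pi> -` {y}))))" .
      qed auto
      have "Ib \<delta> \<le> b \<delta> L / real L" unfolding Ib_def by (rule cINF_lower[OF bddb]) (use L in auto)
      also have "\<dots> \<le> f L / real L" using \<open>b \<delta> L \<le> f L\<close> by (simp add: divide_right_mono)
      finally show ?thesis .
    qed
    then show ?thesis using d(1) by blast
  qed
  have tend: "((\<lambda>\<delta>. Ib \<delta> / c) \<longlongrightarrow> If / c) (at_right 0)"
  proof (rule order_tendstoI)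
    fix y assume "y < If / c"
    show "\<forall>\<^sub>F \<delta> in at_right 0. y < Ib \<delta> / c"
      using eventually_at_right_less[of "0::real"]
    proof eventually_elim
      case (elim \<delta>)
      then have "If / c \<le> Ib \<delta> / c" using low[of \<delta>] c by (simp add: divide_right_mono)
      then show ?case using \<open>y < If / c\<close> by linarith
    qed
  next
    fix y assume "If / c < y"
    then have "If < y * c" using c by (simp add: field_simps)
    then obtain L where L: "L \<ge> 1" "f L / real L < y * c"
      unfolding If_def by (subst (asm) cINF_less_iff[OF _ bddf]) auto
    obtain d where d: "d > 0" "\<And>\<delta>. 0 < \<delta> \<Longrightarrow> \<delta> \<le> d \<Longrightarrow> Ib \<delta> \<le> f L / real L"
      using up[OF L(1)] by blast
    show "\<forall>\<^sub>F \<delta> in at_right 0. Ib \<delta> / c < y"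
      unfolding eventually_at_right_field
    proof (intro exI[of _ d] conjI allI impI)
      fix \<delta> :: real assume "0 < \<delta>" "\<delta> < d"
      then have "Ib \<delta> < y * c" using d(2)[of \<delta>] L(2) by auto
      then show "Ib \<delta> / c < y" using c by (simp add: field_simps)
    qed (use d in auto)
  qed
  have "((\<lambda>\<delta>. lim (\<lambda>N. (SUP y. ln (real (cover_num T N e (\<pi> -` bowen_ball S N y \<delta>)))) / (real N * ln (1 / e))))
          \<longlongrightarrow> If / c) (at_right 0)"
    using tend unfolding c_def[symmetric] b_def[symmetric] br .
  then have "ball_rate T S \<pi> e = If / c"
    unfolding ball_rate_def by (intro tendsto_Lim) auto
  then show ?thesis using fr by simp
qed


theorem lemma3p2:
  fixes T :: "'a::metric_space \<Rightarrow> 'a" and S :: "'b::metric_space \<Rightarrow> 'b" and \<pi> :: "'a \<Rightarrow> 'b"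
  assumes "dyn_sys T" and "dyn_sys S"
    and "continuous_on UNIV \<pi>" and "\<pi> \<circ> T = S \<circ> \<pi>"
  shows "upper_cond_mdim T \<pi> = Limsup (at_right 0) (\<lambda>\<epsilon>. ereal (ball_rate T S \<pi> \<epsilon>))
       \<and> lower_cond_mdim T \<pi> = Liminf (at_right 0) (\<lambda>\<epsilon>. ereal (ball_rate T S \<pi> \<epsilon>))"
proof -
  have X: "compact (UNIV :: 'a set)" "continuous_on UNIV T"
    using assms(1) unfolding dyn_sys_def homeomorphism_def by auto
  have Y: "compact (UNIV :: 'b set)" using assms(2) unfolding dyn_sys_def by auto
  have ev: "\<forall>\<^sub>F \<epsilon> in at_right 0. ereal (fiber_rate T \<pi> \<epsilon>) = ereal (ball_rate T S \<pi> \<epsilon>)"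
    unfolding eventually_at_right_field
  proof (intro exI[of _ 1] conjI allI impI)
    fix e :: real assume "0 < e" "e < 1"
    then show "ereal (fiber_rate T \<pi> e) = ereal (ball_rate T S \<pi> e)"
      using rate_eq[OF X Y assms(3,4)] by simp
  qed simp
  show ?thesis unfolding upper_cond_mdim_def lower_cond_mdim_def
    using Limsup_eq[OF ev] Liminf_eq[OF ev] by simp
qed

end
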